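(* Let $\epsilon>0$, $\delta\ge 0$, $\alpha\in(0,1)$, $0<\theta_0<\theta_1<1$ and $n\ge1$ be given. Observe $X\sim\mathrm{Binom}(n,\theta)$, where $\theta$ is unknown. Set $b=e^{-\epsilon}$ and $q=\frac{2\delta b}{1-b+2\delta b}$. Define $\phi^*:\mathbb{Z}\to[0,1]$ by $\phi^*_x=F_N(x-m)$, where $N\sim\mathrm{Tulap}(0,b,q)$ and $m\in\mathbb{R}$ is chosen such that $\mathbb{E}_{\theta_0}\phi^*_X=\alpha$. Then $\phi^*$ is the uniformly most powerful level-$\alpha$ test of $H_0:\theta=\theta_0$ versus $H_1:\theta=\theta_1$ among $\mathscr D^n_{\epsilon,\delta}$.
   Context: Nearest integer function: for $t\in\mathbb{R}$, $[t]$ is the integer nearest to $t$, where for $z\in\mathbb{Z}$, $[z+1/2]$ is defined to be the nearest even integer. Tulap distribution: for $m\in\mathbb{R}$, $b\in(0,1)$, $q\in[0,1)$, $N_0\sim\mathrm{Tulap}(m,b,0)$ has cdf $F_{N_0}(x)=\frac{b^{-[x-m]}}{1+b}\big(b+(x-m-[x-m]+\tfrac12)(1-b)\big)$ for $x\leq [m]$ and $F_{N_0}(x)=1-\frac{b^{[x-m]}}{1+b}\big(b+([x-m]-(x-m)+\tfrac12)(1-b)\big)$ for $x>[m]$; and $N\sim \mathrm{Tulap}(m,b,q)$ has cdf $F_N(x)=\frac{F_{N_0}(x)-q/2}{1-q}\,I\{q/2\leq F_{N_0}(x)\leq 1-q/2\}+I\{F_{N_0}(x)>1-q/2\}$. A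 (randomized) test is a function $\phi:\{0,1,\dots,n\}\to[0,1]$, $\phi_x$ being the probability of rejecting $H_0$ when $X=x$; its power at $\theta$ is $\mathbb{E}_\theta\phi_X$. For $\epsilon>0,\delta\ge 0$, $\mathscr D^n_{\epsilon,\delta}$ is the set of tests $\phi$ such that for all $x\in\{0,\dots,n-1\}$: $\phi_x\le e^\epsilon\phi_{x+1}+\delta$, $\phi_{x+1}\le e^\epsilon\phi_x+\delta$, $1-\phi_x\le e^\epsilon(1-\phi_{x+1})+\delta$, $1-\phi_{x+1}\le e^\epsilon(1-\phi_x)+\delta$. A test $\phi^*\in\Phi$ is uniformly most powerful (UMP) at level $\alpha$ among $\Phi$ if $\sup_{\theta\in\Theta_0}\mathbb{E}_\theta\phi^*\le\alpha$ and for every $\phi\in\Phi$ with $\sup_{\theta\in\Theta_0}\mathbb{E}_\theta\phi\le\alpha$, $\mathbb{E}_\theta\phi^*\ge\mathbb{E}_\theta\phi$ for all $\theta$ in the alternative. *)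

theory Defs
  imports Complex_Main
begin

definition nearest_int :: "real \<Rightarrow> int" where
  "nearest_int t =
     (if t - of_int \<lfloor>t\<rfloor> = 1/2
      then (if even \<lfloor>t\<rfloor> then \<lfloor>t\<rfloor> else \<lfloor>t\<rfloor> + 1)
      else \<lfloor>t + 1/2\<rfloor>)"

definition tulap0_cdf :: "real \<Rightarrow> real \<Rightarrow> real \<Rightarrow> real" where
  "tulap0_cdf m b x =
     (if x \<le> of_int (nearest_int m)
      then b powi (- nearest_int (x - m)) / (1 + b)
             * (b + (x - m - of_int (nearest_int (x - m)) + 1/2) * (1 - b))
      else 1 - b powi (nearest_int (x - m)) / (1 + b)
             * (b + (of_int (nearest_int (x - m)) - (x - m) + 1/2) * (1 - b)))"

definition tulap_cdf :: "real \<Rightarrow> real \<Rightarrow> real \<Rightarrow> real \<Rightarrow> real" where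
  "tulap_cdf m b q x =
     (let F = tulap0_cdf m b x in
       (if q/2 \<le> F \<and> F \<le> 1 - q/2 then (F - q/2) / (1 - q) else 0)
       + (if F > 1 - q/2 then 1 else 0))"

definition is_test :: "nat \<Rightarrow> (nat \<Rightarrow> real) \<Rightarrow> bool" where
  "is_test n \<phi> \<longleftrightarrow> (\<forall>x\<le>n. 0 \<le> \<phi> x \<and> \<phi> x \<le> 1)"

definition binom_power :: "nat \<Rightarrow> real \<Rightarrow> (nat \<Rightarrow> real) \<Rightarrow> real" where
  "binom_power n \<theta> \<phi> = (\<Sum>x\<le>n. real (n choose x) * \<theta> ^ x * (1 - \<theta>) ^ (n - x) * \<phi> x)"

definition DP_tests :: "nat \<Rightarrow> real \<Rightarrow> real \<Rightarrow> (nat \<Rightarrow> real) set" where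
  "DP_tests n \<epsilon> \<delta> = {\<phi>. is_test n \<phi> \<and> (\<forall>x<n.
       \<phi> x \<le> exp \<epsilon> * \<phi> (x+1) + \<delta> \<and>
       \<phi> (x+1) \<le> exp \<epsilon> * \<phi> x + \<delta> \<and>
       1 - \<phi> x \<le> exp \<epsilon> * (1 - \<phi> (x+1)) + \<delta> \<and>
       1 - \<phi> (x+1) \<le> exp \<epsilon> * (1 - \<phi> x) + \<delta>)}"

definition UMP_simple :: "nat \<Rightarrow> real \<Rightarrow> real \<Rightarrow> real \<Rightarrow> (nat \<Rightarrow> real) set \<Rightarrow> (nat \<Rightarrow> real) \<Rightarrow> bool" where
  "UMP_simple n \<theta>0 \<theta>1 \<alpha> \<Phi> \<phi>s \<longleftrightarrow>
     \<phi>s \<in> \<Phi> \<and> binom_power n \<theta>0 \<phi>s \<le> \<alpha> \<and>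
     (\<forall>\<phi>\<in>\<Phi>. binom_power n \<theta>0 \<phi> \<le> \<alpha> \<longrightarrow> binom_power n \<theta>1 \<phi>s \<ge> binom_power n \<theta>1 \<phi>)"

end

theory Submission
  imports Defs
begin

lemma nearest_int_bound: "\<bar>t - of_int (nearest_int t)\<bar> \<le> 1/2"
proof -
  have f: "of_int \<lfloor>t\<rfloor> \<le> t" "t < of_int \<lfloor>t\<rfloor> + 1" by linarith+
  have g: "of_int \<lfloor>t + 1/2\<rfloor> \<le> t + 1/2" "t + 1/2 < of_int \<lfloor>t + 1/2\<rfloor> + 1" by linarith+
  show ?thesis
  proof (cases "t - of_int \<lfloor>t\<rfloor> = 1/2")
    case True then show ?thesis unfolding nearest_int_def by auto
  next
    case False
    then have "nearest_int t = \<lfloor>t + 1/2\<rfloor>" unfolding nearest_int_def by simp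
    show ?thesis unfolding abs_le_iff \<open>nearest_int t = _\<close> using g by linarith
  qed
qed

lemma nearest_int_0: "nearest_int 0 = 0"
  by (simp add: nearest_int_def)

definition LL :: "real \<Rightarrow> real \<Rightarrow> real" where
  "LL b r = (b + (r + 1/2) * (1 - b)) / (1 + b)"

definition Phi :: "real \<Rightarrow> int \<Rightarrow> real \<Rightarrow> real" where
  "Phi b k r = (if k \<le> 0 then b ^ nat (-k) * LL b r else 1 - b ^ nat k * (1 - LL b r))"

lemma G_eq:
  assumes "0 < b" "b < 1"
  shows "tulap0_cdf 0 b t = Phi b (nearest_int t) (t - of_int (nearest_int t))"
proof -
  obtain k where kd: "nearest_int t = k" by blast
  have kb: "\<bar>t - of_int k\<bar> \<le> 1/2" using nearest_int_bound kd by blast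
  show ?thesis
  proof (cases "t \<le> 0")
    case True
    then have "k \<le> 0" using kb by linarith
    then show ?thesis using True unfolding tulap0_cdf_def Phi_def LL_def nearest_int_0 using kd
      by (simp add: power_int_def)
  next
    case False
    show ?thesis
    proof (cases "k \<le> 0")
      case True
      then have "k = 0" using kb False by linarith
      then show ?thesis using False unfolding tulap0_cdf_def Phi_def LL_def nearest_int_0 using kd
        using assms by (simp add: field_simps)
    next
      case F2: False
      then show ?thesis using False unfolding tulap0_cdf_def Phi_def LL_def nearest_int_0 using kd
        using assms by (simp add: power_int_def field_simps)
    qed
  qed
qed

lemma Phi_tie:
  assumes "0 < b" "b < 1"
  shows "Phi b (k+1) (-1/2) = Phi b k (1/2)"
proof -
  consider "k \<le> -1" | "k = 0" | "k \<ge> 1" by linarith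
  then show ?thesis
  proof cases
    case 1
    then have "nat (-k) = Suc (nat (-(k+1)))" by simp
    then show ?thesis using 1 assms unfolding Phi_def LL_def by (simp add: field_simps)
  next
    case 2
    then show ?thesis using assms unfolding Phi_def LL_def by (simp add: field_simps)
  next
    case 3
    then have "nat (k+1) = Suc (nat k)" by simp
    then show ?thesis using 3 assms unfolding Phi_def LL_def by (simp add: field_simps)
  qed
qed

lemma G_rep:
  assumes "0 < b" "b < 1" "\<bar>r\<bar> \<le> 1/2"
  shows "tulap0_cdf 0 b (of_int k + r) = Phi b k r"
proof -
  define k' where "k' = nearest_int (of_int k + r)"
  define r' where "r' = of_int k + r - of_int k'"
  have r': "\<bar>r'\<bar> \<le> 1/2" using nearest_int_bound r'_def k'_def by blast
  have G: "tulap0_cdf 0 b (of_int k + r) = Phi b k' r'" using G_eq[OF assms(1,2)] k'_def r'_def by simp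
  have d: "real_of_int (k' - k) = r - r'" using r'_def by simp
  have "real_of_int (k' - k) < 2" "real_of_int (k' - k) > -2" using d assms(3) r' unfolding abs_le_iff by linarith+
  then have "k' - k < 2" "k' - k > -2" by (metis of_int_less_numeral_iff, metis of_int_less_iff of_int_minus of_int_numeral)
  then consider "k' = k" | "k' = k + 1" | "k' = k - 1" by linarith
  then show ?thesis
  proof cases
    case 1 then show ?thesis using G d by simp
  next
    case 2 then have "r - r' = 1" using d by simp
    then have rr: "r = 1/2" "r' = -1/2" using assms(3) r' unfolding abs_le_iff by linarith+
    have "Phi b k r = Phi b k (1/2)" "Phi b k' r' = Phi b (k+1) (-1/2)" by (simp only: rr 2)+
    then show ?thesis using G Phi_tie[OF assms(1,2), of k] by simp
  next
    case 3 then have "r - r' = -1" using d by simp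
    then have rr: "r = -1/2" "r' = 1/2" using assms(3) r' unfolding abs_le_iff by linarith+
    have "Phi b k r = Phi b (k-1+1) (-1/2)" "Phi b k' r' = Phi b (k-1) (1/2)" by (simp only: rr 3 diff_add_cancel)+
    then show ?thesis using G Phi_tie[OF assms(1,2), of "k-1"] by simp
  qed
qed

lemma LL_bounds:
  assumes "0 < b" "b < 1" "\<bar>r\<bar> \<le> 1/2"
  shows "b \<le> LL b r * (1+b)" "LL b r * (1+b) \<le> 1" "0 \<le> LL b r" "LL b r \<le> 1"
proof -
  have e: "LL b r * (1+b) = b + (r + 1/2) * (1 - b)" using assms unfolding LL_def by (simp add: field_simps)
  have r: "0 \<le> r + 1/2" "r + 1/2 \<le> 1" using assms(3) by linarith+
  have "0 \<le> (r + 1/2) * (1 - b)" using r assms by simp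
  then show 1: "b \<le> LL b r * (1+b)" using e by linarith
  have "(r + 1/2) * (1 - b) \<le> 1 - b" using mult_right_mono[of "r+1/2" 1 "1-b"] r assms by simp
  then show 2: "LL b r * (1+b) \<le> 1" using e by linarith
  show "0 \<le> LL b r" using assms unfolding LL_def using r by simp
  show "LL b r \<le> 1" using 2 assms by (smt (verit) mult_le_cancel_left1)
qed

lemma AL1:
  fixes b g :: real
  assumes "0 < b" "b < 1" "g * (1+b) \<le> b"
  shows "g / b \<le> 1 - b + b * g"
proof -
  have "b*(1-b+b*g) - g = (1-b)*(b - g*(1+b))" by (simp add: algebra_simps)
  also have "\<dots> \<ge> 0" using assms by simp
  finally have "g \<le> b*(1-b+b*g)" by simp
  then show ?thesis using assms by (simp add: pos_divide_le_eq mult.commute)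
qed

lemma AL2:
  fixes b g :: real
  assumes "0 < b" "b < 1" "g * (1+b) \<ge> b"
  shows "1 - b + b * g \<le> g / b"
proof -
  have "b*(1-b+b*g) - g = (1-b)*(b - g*(1+b))" by (simp add: algebra_simps)
  also have "\<dots> \<le> 0" using assms by (simp add: mult_nonneg_nonpos)
  finally have "b*(1-b+b*g) \<le> g" by simp
  then show ?thesis using assms by (simp add: pos_le_divide_eq mult.commute)
qed

lemma Phi_range:
  assumes "0 < b" "b < 1" "\<bar>r\<bar> \<le> 1/2"
  shows "0 \<le> Phi b k r \<and> Phi b k r \<le> 1"
proof -
  note L = LL_bounds[OF assms]
  have p: "\<And>j. 0 \<le> b ^ j \<and> b ^ j \<le> (1::real)" using assms by (simp add: power_le_one)
  show ?thesis
  proof (cases "k \<le> 0")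
    case True
    have "b ^ nat (-k) * LL b r \<le> 1 * 1" using p L by (intro mult_mono) auto
    then show ?thesis using True p L unfolding Phi_def by simp
  next
    case False
    have "b ^ nat k * (1 - LL b r) \<le> 1 * 1" using p L by (intro mult_mono) auto
    moreover have "0 \<le> b ^ nat k * (1 - LL b r)" using p L by simp
    ultimately show ?thesis using False unfolding Phi_def by simp
  qed
qed

lemma Phi_step:
  fixes k :: int
  assumes "0 < b" "b < 1" "\<bar>r\<bar> \<le> 1/2"
  defines "g \<equiv> Phi b k r" and "g' \<equiv> Phi b (k+1) r"
  shows "g' \<le> g / b \<and> g' \<le> 1 - b + b * g \<and> (g' = g / b \<or> g' = 1 - b + b * g)"
proof -
  note L = LL_bounds[OF assms(1-3)]
  have p: "\<And>j. 0 \<le> b ^ j \<and> b ^ j \<le> (1::real)" using assms by (simp add: power_le_one)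
  consider "k \<le> -1" | "k = 0" | "k \<ge> 1" by linarith
  then show ?thesis
  proof cases
    case 1
    define j where "j = nat (-(k+1))"
    have "nat (-k) = Suc j" using 1 j_def by simp
    then have gg: "g = b * (b^j * LL b r)" "g' = b^j * LL b r" using 1 unfolding g_def g'_def Phi_def j_def by simp_all
    have e1: "g' = g / b" using gg assms by simp
    have pj: "b^j \<le> 1" using p by blast
    have "0 \<le> LL b r * (1+b)" using L assms by linarith
    then have "b^j * (LL b r * (1+b)) \<le> 1" using mult_le_one[OF pj] L by blast
    then have "b * (b^j * (LL b r * (1+b))) \<le> b * 1" using assms by (intro mult_left_mono) auto
    moreover have "g * (1+b) = b * (b^j * (LL b r * (1+b)))" by (simp only: gg(1) mult.assoc)
    ultimately have "g * (1+b) \<le> b" by linarith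
    then have "g / b \<le> 1 - b + b * g" using AL1 assms by blast
    then show ?thesis using e1 by simp
  next
    case 2
    then have gg: "g = LL b r" "g' = 1 - b + b * g" unfolding g_def g'_def Phi_def by (simp_all add: algebra_simps)
    have "b \<le> g * (1+b)" using L(1) gg(1) by simp
    then have "1 - b + b * g \<le> g / b" by (rule AL2[OF assms(1,2)])
    then show ?thesis using gg(2) by simp
  next
    case 3
    define i where "i = nat k"
    have "nat (k+1) = Suc i" using 3 i_def by simp
    then have gg: "g = 1 - b^i * (1 - LL b r)" "g' = 1 - b * (b^i * (1 - LL b r))" using 3 unfolding g_def g'_def Phi_def i_def by simp_all
    have e1: "g' = 1 - b + b * g" unfolding gg by (simp add: algebra_simps)
    have "b^i * (1 - LL b r) \<le> 1 * (1 - LL b r)" using p L by (intro mult_right_mono) auto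
    then have "(1 - g) * (1+b) \<le> (1 - LL b r) * (1+b)" using gg assms by (intro mult_right_mono) auto
    also have "\<dots> \<le> 1" using L by (simp add: algebra_simps)
    finally have "g * (1+b) \<ge> b" by (simp add: algebra_simps)
    then have "1 - b + b * g \<le> g / b" using AL2 assms by blast
    then show ?thesis using e1 by simp
  qed
qed

abbreviation G :: "real \<Rightarrow> real \<Rightarrow> real" where "G b t \<equiv> tulap0_cdf 0 b t"

lemma G_split:
  fixes t :: real
  obtains k r where "\<bar>r\<bar> \<le> 1/2" "t = of_int k + r"
  using nearest_int_bound[of t] by (metis add.commute diff_add_cancel)

lemma G_range:
  assumes "0 < b" "b < 1"
  shows "0 \<le> G b t \<and> G b t \<le> 1"
proof -
  obtain k r where kr: "\<bar>r\<bar> \<le> 1/2" "t = of_int k + r" using G_split by blast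
  show ?thesis using G_rep[OF assms kr(1)] Phi_range[OF assms kr(1)] kr(2) by simp
qed

lemma G_step:
  assumes "0 < b" "b < 1"
  shows "G b (t+1) \<le> G b t / b \<and> G b (t+1) \<le> 1 - b + b * G b t \<and>
         (G b (t+1) = G b t / b \<or> G b (t+1) = 1 - b + b * G b t)"
proof -
  obtain k r where kr: "\<bar>r\<bar> \<le> 1/2" "t = of_int k + r" using G_split by blast
  have t1: "t + 1 = of_int (k+1) + r" using kr by simp
  have e1: "G b (t+1) = Phi b (k+1) r" unfolding t1 by (rule G_rep[OF assms kr(1)])
  have e2: "G b t = Phi b k r" unfolding kr(2) by (rule G_rep[OF assms kr(1)])
  show ?thesis unfolding e1 e2 by (rule Phi_step[OF assms kr(1)])
qed

lemma Phi_cont: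
  assumes "0 < b"
  shows "continuous_on UNIV (\<lambda>t. Phi b k (t - a))"
proof (cases "k \<le> 0")
  case True then show ?thesis using assms unfolding Phi_def LL_def by (auto intro!: continuous_intros)
next
  case False then show ?thesis using assms unfolding Phi_def LL_def by (auto intro!: continuous_intros)
qed

lemma G_cont:
  assumes "0 < b" "b < 1"
  shows "isCont (G b) t0"
proof -
  define k where "k = \<lfloor>t0\<rfloor>"
  define c where "c = real_of_int k + 1/2"
  define H where "H t = (if t \<le> c then Phi b k (t - of_int k) else Phi b (k+1) (t - of_int (k+1)))" for t
  have "continuous_on ({..c} \<union> {c..}) H"
    unfolding H_def
  proof (rule continuous_on_cases)
    show "continuous_on {..c} (\<lambda>t. Phi b k (t - of_int k))" by (rule continuous_on_subset[OF Phi_cont[OF assms(1)]]) simp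
    show "continuous_on {c..} (\<lambda>t. Phi b (k+1) (t - of_int (k+1)))" by (rule continuous_on_subset[OF Phi_cont[OF assms(1)]]) simp
    show "\<forall>x. x \<in> {..c} \<and> \<not> x \<le> c \<or> x \<in> {c..} \<and> x \<le> c \<longrightarrow>
      Phi b k (x - of_int k) = Phi b (k+1) (x - of_int (k+1))"
    proof (intro allI impI)
      fix x assume "x \<in> {..c} \<and> \<not> x \<le> c \<or> x \<in> {c..} \<and> x \<le> c"
      then have x: "x = c" by auto
      have h: "x - of_int k = 1/2" "x - of_int (k+1) = -1/2" using x c_def by simp_all
      show "Phi b k (x - of_int k) = Phi b (k+1) (x - of_int (k+1))"
        unfolding h by (rule Phi_tie[OF assms, symmetric])
    qed
  qed auto
  moreover have "{..c} \<union> {c..} = (UNIV::real set)" by auto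
  ultimately have Hc: "continuous_on UNIV H" by simp
  define U where "U = {real_of_int k - 1/2 <..< real_of_int k + 3/2}"
  have oU: "open U" unfolding U_def by simp
  have fl: "of_int k \<le> t0" "t0 < of_int k + 1" using k_def by linarith+
  have t0U: "t0 \<in> U" unfolding U_def greaterThanLessThan_iff using fl by linarith
  have eq: "H t = G b t" if "t \<in> U" for t
  proof (cases "t \<le> c")
    case True
    have r: "\<bar>t - of_int k\<bar> \<le> 1/2" using True that c_def U_def unfolding abs_le_iff by auto
    have "G b t = G b (of_int k + (t - of_int k))" by simp
    also have "\<dots> = Phi b k (t - of_int k)" by (rule G_rep[OF assms r])
    finally show ?thesis using True H_def by simp
  next
    case False
    have r: "\<bar>t - of_int (k+1)\<bar> \<le> 1/2" using False that c_def U_def unfolding abs_le_iff by auto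
    have "G b t = G b (of_int (k+1) + (t - of_int (k+1)))" by simp
    also have "\<dots> = Phi b (k+1) (t - of_int (k+1))" by (rule G_rep[OF assms r])
    finally show ?thesis using False H_def by simp
  qed
  have "continuous_on U H" by (rule continuous_on_subset[OF Hc]) simp
  moreover have "continuous_on U H = continuous_on U (G b)" by (rule continuous_on_cong[OF refl eq])
  ultimately have "continuous_on U (G b)" by simp
  then have "\<forall>x\<in>U. isCont (G b) x" using continuous_on_eq_continuous_at[OF oU] by blast
  then show ?thesis using t0U by blast
qed

lemma G_low:
  assumes "0 < b" "b < 1" "t \<le> - (real j + 1)"
  shows "G b t \<le> b ^ j"
proof -
  define k where "k = nearest_int t"
  have kb: "\<bar>t - of_int k\<bar> \<le> 1/2" using nearest_int_bound k_def by blast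
  have "real_of_int k < real_of_int (- int j)" using kb assms(3) unfolding abs_le_iff by simp
  then have kl: "k < - int j" by (simp only: of_int_less_iff)
  then have "j \<le> nat (-k)" by simp
  then have pb: "b ^ nat (-k) \<le> b ^ j" using assms by (intro power_decreasing) auto
  have r: "\<bar>t - of_int k\<bar> \<le> 1/2" by (rule kb)
  have L: "0 \<le> LL b r \<and> LL b r \<le> 1" if "\<bar>r\<bar> \<le> 1/2" for r using LL_bounds[OF assms(1,2) that] by simp
  have "G b t = b ^ nat (-k) * LL b (t - of_int k)" using G_eq[OF assms(1,2), of t] kl unfolding k_def[symmetric] Phi_def by simp
  also have "\<dots> \<le> b ^ nat (-k) * 1" using L[OF r] assms by (intro mult_left_mono) auto
  also have "\<dots> \<le> b ^ j" using pb by simp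
  finally show ?thesis .
qed

lemma G_high:
  assumes "0 < b" "b < 1" "t \<ge> real j + 1"
  shows "1 - G b t \<le> b ^ j"
proof -
  define k where "k = nearest_int t"
  have kb: "\<bar>t - of_int k\<bar> \<le> 1/2" using nearest_int_bound k_def by blast
  have "real_of_int k > real_of_int (int j)" using kb assms(3) unfolding abs_le_iff by simp
  then have kl: "k > int j" by (simp only: of_int_less_iff)
  then have "j \<le> nat k" by simp
  then have pb: "b ^ nat k \<le> b ^ j" using assms by (intro power_decreasing) auto
  have r: "\<bar>t - of_int k\<bar> \<le> 1/2" by (rule kb)
  have L: "0 \<le> LL b r \<and> LL b r \<le> 1" if "\<bar>r\<bar> \<le> 1/2" for r using LL_bounds[OF assms(1,2) that] by simp
  have "1 - G b t = b ^ nat k * (1 - LL b (t - of_int k))" using G_eq[OF assms(1,2), of t] kl unfolding k_def[symmetric] Phi_def by simp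
  also have "\<dots> \<le> b ^ nat k * 1" using L[OF r] assms by (intro mult_left_mono) auto
  also have "\<dots> \<le> b ^ j" using pb by simp
  finally show ?thesis .
qed

definition clamp :: "real \<Rightarrow> real" where "clamp v = max 0 (min 1 v)"

lemma clamp_range: "0 \<le> clamp v" "clamp v \<le> 1" unfolding clamp_def by auto
lemma clamp_mono: "v \<le> w \<Longrightarrow> clamp v \<le> clamp w" unfolding clamp_def by auto
lemma clamp_le:
  assumes "w \<le> a + c * v" "c > 0" "a \<ge> 0" "a + c \<ge> 1"
  shows "clamp w \<le> a + c * clamp v"
proof (cases "v \<le> 0")
  case True
  have "c * v \<le> 0" using True assms(2) by (simp add: mult_nonneg_nonpos)
  then show ?thesis using assms True unfolding clamp_def by auto
next
  case False
  show ?thesis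
  proof (cases "v \<ge> 1")
    case True
    have "c * 1 \<le> c * v" using True assms(2) by (intro mult_left_mono) auto
    then show ?thesis using assms True unfolding clamp_def by auto
  next
    case F2: False
    then show ?thesis using assms False unfolding clamp_def by auto
  qed
qed

lemma tulap_eq:
  assumes "0 < b" "b < 1" "0 \<le> q" "q < 1"
  shows "tulap_cdf 0 b q t = clamp ((G b t - q/2) / (1 - q))"
proof -
  have g: "0 \<le> G b t" "G b t \<le> 1" using G_range[OF assms(1,2)] by auto
  have q1: "0 < 1 - q" using assms by simp
  consider "G b t < q/2" | "q/2 \<le> G b t \<and> G b t \<le> 1 - q/2" | "G b t > 1 - q/2" by linarith
  then show ?thesis
  proof cases
    case 1
    then have "(G b t - q/2) / (1 - q) < 0" using q1 by (simp add: divide_neg_pos)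
    then show ?thesis using 1 assms unfolding tulap_cdf_def clamp_def Let_def by auto
  next
    case 2
    then have "(G b t - q/2) / (1 - q) \<le> 1" "0 \<le> (G b t - q/2) / (1 - q)" using q1 by (simp_all add: divide_le_eq_1)
    then show ?thesis using 2 assms unfolding tulap_cdf_def clamp_def Let_def by auto
  next
    case 3
    then have "(G b t - q/2) / (1 - q) > 1" using q1 assms by (simp add: less_divide_eq_1)
    then show ?thesis using 3 assms unfolding tulap_cdf_def clamp_def Let_def by auto
  qed
qed

lemma V_ident:
  fixes b q \<delta> g :: real
  assumes "0 < b" "b < 1" "q < 1" "q * (1 - b) = 2 * \<delta> * b * (1 - q)"
  shows "(g / b - q/2) / (1 - q) = ((g - q/2) / (1 - q)) / b + \<delta>"
    and "(1 - b + b * g - q/2) / (1 - q) = 1 - b + b * ((g - q/2) / (1 - q)) + b * \<delta>"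
proof -
  have q1: "1 - q \<noteq> 0" using assms by simp
  have e1: "2*b*(g / b - q/2) = 2*g - b*q" using assms by (simp add: field_simps)
  have "2*b*((g - q/2) / b + \<delta> * (1 - q)) = 2*g - q + 2 * \<delta> * b * (1 - q)" using assms by (simp add: field_simps)
  also have "\<dots> = 2*g - b*q" using assms(4) by (simp add: algebra_simps)
  finally have "2*b*(g / b - q/2) = 2*b*((g - q/2) / b + \<delta> * (1 - q))" using e1 by simp
  then have h: "(g / b - q/2) = ((g - q/2) / b + \<delta> * (1 - q))" using assms q1 by simp
  have b0: "b \<noteq> 0" using assms by simp
  have "((g - q/2) / b + \<delta> * (1 - q)) / (1 - q) = ((g - q/2) / (1 - q)) / b + \<delta>" using q1 b0 by (simp add: field_simps)
  then show "(g / b - q/2) / (1 - q) = ((g - q/2) / (1 - q)) / b + \<delta>" unfolding h .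
  have "(1 - b + b * g - q/2) * 2 = (2 * (1 - b) * (1 - q) + 2 * b * (g - q/2) + 2 * b * \<delta> * (1 - q))"
    using assms by (simp add: algebra_simps)
  then have h: "(1 - b + b * g - q/2) = ((1 - b) * (1 - q) + b * (g - q/2) + b * \<delta> * (1 - q))" by (simp add: algebra_simps)
  have "((1 - b) * (1 - q) + b * (g - q/2) + b * \<delta> * (1 - q)) / (1 - q) = 1 - b + b * ((g - q/2) / (1 - q)) + b * \<delta>"
    using q1 by (simp add: field_simps)
  then show "(1 - b + b * g - q/2) / (1 - q) = 1 - b + b * ((g - q/2) / (1 - q)) + b * \<delta>" unfolding h .
qed

lemma tul_props:
  fixes b q \<delta> t :: real
  assumes b: "0 < b" "b < 1" and q: "0 \<le> q" "q < 1" and d: "0 \<le> \<delta>"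
    and hq: "q * (1 - b) = 2 * \<delta> * b * (1 - q)"
  defines "F \<equiv> tulap_cdf 0 b q"
  shows "0 \<le> F t" "F t \<le> 1" "F t \<le> F (t+1)" "F (t+1) \<le> F t / b + \<delta>"
    "F (t+1) \<le> 1 - b + b * F t + b * \<delta>"
    "\<And>p p'. p \<le> F t \<Longrightarrow> 0 < F t \<Longrightarrow> p' \<le> p / b + \<delta> \<Longrightarrow> p' \<le> 1 - b + b * p + b * \<delta> \<Longrightarrow> p' \<le> 1
       \<Longrightarrow> p' \<le> F (t+1)"
proof -
  define V where "V s = (G b s - q/2) / (1 - q)" for s
  have FV: "F s = clamp (V s)" for s unfolding F_def V_def by (rule tulap_eq[OF b q])
  have q1: "0 < 1 - q" using q by simp
  have st: "G b (t+1) \<le> G b t / b \<and> G b (t+1) \<le> 1 - b + b * G b t \<and>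
         (G b (t+1) = G b t / b \<or> G b (t+1) = 1 - b + b * G b t)" by (rule G_step[OF b])
  have gr: "0 \<le> G b t" "G b t \<le> 1" using G_range[OF b] by auto
  have i1: "(G b t / b - q/2) / (1 - q) = V t / b + \<delta>"
    and i2: "(1 - b + b * G b t - q/2) / (1 - q) = 1 - b + b * V t + b * \<delta>"
    using V_ident[OF b q(2) hq, of "G b t"] unfolding V_def by auto
  have Vs1: "V (t+1) \<le> V t / b + \<delta>"
  proof -
    have "V (t+1) \<le> (G b t / b - q/2) / (1 - q)" unfolding V_def using st q1 by (intro divide_right_mono) auto
    then show ?thesis using i1 by simp
  qed
  have Vs2: "V (t+1) \<le> 1 - b + b * V t + b * \<delta>"
  proof -
    have "V (t+1) \<le> (1 - b + b * G b t - q/2) / (1 - q)" unfolding V_def using st q1 by (intro divide_right_mono) auto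
    then show ?thesis using i2 by simp
  qed
  have Vs3: "V (t+1) = V t / b + \<delta> \<or> V (t+1) = 1 - b + b * V t + b * \<delta>"
    using st i1 i2 unfolding V_def by auto
  have gm: "G b t \<le> G b (t+1)"
  proof -
    have "G b t * b \<le> G b t * 1" using gr b by (intro mult_left_mono) auto
    then have "G b t \<le> G b t / b" using gr b by (simp add: le_divide_eq)
    moreover have "G b t \<le> 1 - b + b * G b t"
    proof -
      have "(1 - b) * G b t \<le> (1 - b) * 1" using gr b by (intro mult_left_mono) auto
      then show ?thesis by (simp add: algebra_simps)
    qed
    ultimately show ?thesis using st by auto
  qed
  have Vm: "V t \<le> V (t+1)" unfolding V_def using gm q1 by (intro divide_right_mono) auto
  show "0 \<le> F t" "F t \<le> 1" unfolding FV by (rule clamp_range)+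
  show "F t \<le> F (t+1)" unfolding FV by (rule clamp_mono[OF Vm])
  show "F (t+1) \<le> F t / b + \<delta>"
  proof -
    have "clamp (V (t+1)) \<le> \<delta> + (1/b) * clamp (V t)"
    proof (rule clamp_le)
      show "V (t + 1) \<le> \<delta> + 1 / b * V t" using Vs1 by simp
      show "0 < 1/b" using b by simp
      show "0 \<le> \<delta>" by (rule d)
      have "1 \<le> 1/b" using b by simp
      then show "1 \<le> \<delta> + 1/b" using d by linarith
    qed
    then show ?thesis unfolding FV by simp
  qed
  show "F (t+1) \<le> 1 - b + b * F t + b * \<delta>"
  proof -
    have "clamp (V (t+1)) \<le> (1 - b + b * \<delta>) + b * clamp (V t)"
    proof (rule clamp_le)
      show "V (t + 1) \<le> (1 - b + b * \<delta>) + b * V t" using Vs2 by simp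
      show "0 < b" using b by simp
      have "0 \<le> b * \<delta>" using b d by simp
      then show "0 \<le> 1 - b + b * \<delta>" using b by linarith
      show "1 \<le> 1 - b + b * \<delta> + b" using \<open>0 \<le> b * \<delta>\<close> by linarith
    qed
    then show ?thesis unfolding FV by simp
  qed
  show "p' \<le> F (t+1)" if h: "p \<le> F t" "0 < F t" "p' \<le> p / b + \<delta>" "p' \<le> 1 - b + b * p + b * \<delta>" "p' \<le> 1" for p p'
  proof (cases "V t \<ge> 1")
    case True
    then have "V (t+1) \<ge> 1" using Vm by simp
    then have "F (t+1) = 1" unfolding FV clamp_def by simp
    then show ?thesis using h by simp
  next
    case False
    have "V t > 0" using h(2) unfolding FV clamp_def by (cases "V t \<le> 0") auto
    then have Ft: "F t = V t" using False unfolding FV clamp_def by simp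
    have "p / b \<le> V t / b" using h(1) Ft b by (simp add: divide_right_mono)
    moreover have "b * p \<le> b * V t" using h(1) Ft b by (simp add: mult_left_mono)
    ultimately have "p' \<le> V (t+1)" using Vs3 h by auto
    then show ?thesis unfolding FV clamp_def using h(5) by simp
  qed
qed

lemma np:
  fixes n :: nat and \<theta>0 \<theta>1 :: real and \<phi> \<phi>s :: "nat \<Rightarrow> real"
  assumes th: "0 < \<theta>0" "\<theta>0 < \<theta>1" "\<theta>1 < 1"
    and nonneg: "\<forall>x\<le>n. 0 \<le> \<phi> x"
    and mono: "\<forall>x<n. \<phi>s x \<le> \<phi>s (Suc x)"
    and propag: "\<forall>x<n. \<phi> x \<le> \<phi>s x \<and> 0 < \<phi>s x \<longrightarrow> \<phi> (Suc x) \<le> \<phi>s (Suc x)"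
    and lvl: "binom_power n \<theta>0 \<phi> \<le> binom_power n \<theta>0 \<phi>s"
  shows "binom_power n \<theta>1 \<phi> \<le> binom_power n \<theta>1 \<phi>s"
proof -
  have cross: "\<phi> z \<le> \<phi>s z" if x: "x \<le> n" "\<phi> x < \<phi>s x" and z: "x \<le> z" "z \<le> n" for x z
  proof -
    have "z \<le> n \<Longrightarrow> x \<le> z \<Longrightarrow> \<phi>s x \<le> \<phi>s z \<and> \<phi> z \<le> \<phi>s z" for z
    proof (induction z)
      case 0
      then show ?case using x by simp
    next
      case (Suc z)
      show ?case
      proof (cases "x = Suc z")
        case True then show ?thesis using x by simp
      next
        case False
        then have xz: "x \<le> z" "z < n" using Suc.prems by auto
        then have IH: "\<phi>s x \<le> \<phi>s z" "\<phi> z \<le> \<phi>s z" using Suc.IH by auto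
        have "0 \<le> \<phi> x" using nonneg x by simp
        then have "0 < \<phi>s z" using IH x by linarith
        then have "\<phi> (Suc z) \<le> \<phi>s (Suc z)" using propag xz IH by blast
        moreover have "\<phi>s z \<le> \<phi>s (Suc z)" using mono xz by blast
        ultimately show ?thesis using IH by linarith
      qed
    qed
    then show ?thesis using z by blast
  qed
  define P0 where "P0 x = real (n choose x) * \<theta>0 ^ x * (1 - \<theta>0) ^ (n - x)" for x
  define \<beta> where "\<beta> = (1 - \<theta>1) / (1 - \<theta>0)"
  define a where "a = \<theta>1 / \<theta>0"
  define R where "R x = \<beta> ^ n * (a / \<beta>) ^ x" for x :: nat
  have \<beta>pos: "0 < \<beta>" "\<beta> < 1" unfolding \<beta>_def using th by (auto simp: divide_less_eq)
  have a1: "1 < a" unfolding a_def using th by simp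
  have ab: "1 \<le> a / \<beta>" using \<beta>pos a1 by (simp add: le_divide_eq)
  have Rmono: "R x \<le> R z" if "x \<le> z" for x z
    unfolding R_def using power_increasing[OF that ab] \<beta>pos by (intro mult_left_mono) auto
  have Rpos: "0 \<le> R x" for x unfolding R_def using \<beta>pos ab by simp
  have P0pos: "0 \<le> P0 x" for x unfolding P0_def using th by simp
  have P1: "real (n choose x) * \<theta>1 ^ x * (1 - \<theta>1) ^ (n - x) = P0 x * R x" if "x \<le> n" for x
  proof -
    define k where "k = n - x"
    have k: "n = k + x" using that k_def by simp
    have t0: "\<theta>0 \<noteq> 0" "1 - \<theta>0 \<noteq> 0" "1 - \<theta>1 \<noteq> 0" "\<beta> \<noteq> 0" using th \<beta>pos by auto
    have e1: "(1 - \<theta>0) ^ k * \<beta> ^ k = (1 - \<theta>1) ^ k"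
      unfolding \<beta>_def power_mult_distrib[symmetric] using t0 by simp
    have e2: "\<beta> ^ x * (a / \<beta>) ^ x = a ^ x"
      unfolding power_mult_distrib[symmetric] using t0 by simp
    have e3: "\<theta>0 ^ x * a ^ x = \<theta>1 ^ x"
      unfolding a_def power_mult_distrib[symmetric] using t0 by simp
    have en: "\<beta> ^ n = \<beta> ^ k * \<beta> ^ x" unfolding k by (rule power_add)
    have "P0 x * R x = real (n choose x) * ((\<theta>0 ^ x * (\<beta> ^ x * (a / \<beta>) ^ x)) * ((1 - \<theta>0) ^ k * \<beta> ^ k))"
      unfolding P0_def R_def en k_def[symmetric] by (simp only: ac_simps)
    also have "\<dots> = real (n choose x) * \<theta>1 ^ x * (1 - \<theta>1) ^ k" unfolding e1 e2 e3 by (simp only: ac_simps)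
    finally show ?thesis unfolding k_def by simp
  qed
  have B0: "binom_power n \<theta>0 \<psi> = (\<Sum>x\<le>n. P0 x * \<psi> x)" for \<psi> unfolding binom_power_def P0_def by simp
  have B1: "binom_power n \<theta>1 \<psi> = (\<Sum>x\<le>n. P0 x * R x * \<psi> x)" for \<psi>
    unfolding binom_power_def using P1 by (intro sum.cong) auto
  obtain y where y: "y \<le> n" "\<forall>x\<le>n. 0 \<le> (R x - R y) * (\<phi>s x - \<phi> x)"
  proof (cases "\<exists>x\<le>n. \<phi> x < \<phi>s x")
    case True
    define y where "y = (LEAST x. x \<le> n \<and> \<phi> x < \<phi>s x)"
    have yl: "y \<le> n" "\<phi> y < \<phi>s y" using LeastI_ex[OF True] unfolding y_def by auto
    have below: "\<phi>s x \<le> \<phi> x" if "x < y" for x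
    proof -
      have "\<not> (x \<le> n \<and> \<phi> x < \<phi>s x)" using not_less_Least[OF that[unfolded y_def]] by blast
      then show ?thesis using that yl by auto
    qed
    show ?thesis
    proof (rule that[OF yl(1)], intro allI impI)
      fix x assume xn: "x \<le> n"
      show "0 \<le> (R x - R y) * (\<phi>s x - \<phi> x)"
      proof (cases "x < y")
        case True
        have "R x - R y \<le> 0" using Rmono[of x y] True by simp
        moreover have "\<phi>s x - \<phi> x \<le> 0" using below True by simp
        ultimately show ?thesis by (simp add: mult_nonpos_nonpos)
      next
        case False
        have "0 \<le> R x - R y" using Rmono[of y x] False by simp
        moreover have "0 \<le> \<phi>s x - \<phi> x" using cross[OF yl(1) yl(2), of x] False xn by simp
        ultimately show ?thesis by simp
      qed
    qed
  next
    case False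
    show ?thesis
    proof (rule that[of n], simp, intro allI impI)
      fix x assume xn: "x \<le> n"
      have "R x - R n \<le> 0" using Rmono[OF xn] by simp
      moreover have "\<phi>s x - \<phi> x \<le> 0" using False xn by auto
      ultimately show "0 \<le> (R x - R n) * (\<phi>s x - \<phi> x)" by (simp add: mult_nonpos_nonpos)
    qed
  qed
  have "binom_power n \<theta>1 \<phi>s - binom_power n \<theta>1 \<phi> = (\<Sum>x\<le>n. P0 x * R x * (\<phi>s x - \<phi> x))"
    unfolding B1 by (simp add: sum_subtractf[symmetric] algebra_simps)
  also have "\<dots> = (\<Sum>x\<le>n. P0 x * ((R x - R y) * (\<phi>s x - \<phi> x))) + R y * (\<Sum>x\<le>n. P0 x * (\<phi>s x - \<phi> x))"
    by (simp add: sum_distrib_left sum.distrib[symmetric] algebra_simps)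
  also have "\<dots> \<ge> 0"
  proof -
    have "0 \<le> (\<Sum>x\<le>n. P0 x * ((R x - R y) * (\<phi>s x - \<phi> x)))"
      using y P0pos by (intro sum_nonneg) simp
    moreover have "(\<Sum>x\<le>n. P0 x * (\<phi>s x - \<phi> x)) = binom_power n \<theta>0 \<phi>s - binom_power n \<theta>0 \<phi>"
      unfolding B0 by (simp add: sum_subtractf[symmetric] algebra_simps)
    then have "0 \<le> (\<Sum>x\<le>n. P0 x * (\<phi>s x - \<phi> x))" using lvl by simp
    ultimately show ?thesis using Rpos[of y] by simp
  qed
  finally show ?thesis by simp
qed

theorem theorem4:
  fixes \<epsilon> \<delta> \<alpha> \<theta>0 \<theta>1 :: real and n :: nat
  assumes "\<epsilon> > 0" and "\<delta> \<ge> 0" and "0 < \<alpha>" and "\<alpha> < 1"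
    and "0 < \<theta>0" and "\<theta>0 < \<theta>1" and "\<theta>1 < 1" and "n \<ge> 1"
  defines "b \<equiv> exp (- \<epsilon>)"
  defines "q \<equiv> 2 * \<delta> * b / (1 - b + 2 * \<delta> * b)"
  shows "(\<exists>m. binom_power n \<theta>0 (\<lambda>x. tulap_cdf 0 b q (real x - m)) = \<alpha>)
       \<and> (\<forall>m. binom_power n \<theta>0 (\<lambda>x. tulap_cdf 0 b q (real x - m)) = \<alpha> \<longrightarrow>
             UMP_simple n \<theta>0 \<theta>1 \<alpha> (DP_tests n \<epsilon> \<delta>) (\<lambda>x. tulap_cdf 0 b q (real x - m)))"
proof -
  have b0: "0 < b" "b < 1" unfolding b_def using assms(1) by auto
  have eb: "exp \<epsilon> = 1 / b" unfolding b_def by (simp add: exp_minus inverse_eq_divide)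
  have db: "0 \<le> \<delta> * b" using assms(2) b0 by simp
  have D: "0 < 1 - b + 2 * \<delta> * b" using b0 db by linarith
  have q0: "0 \<le> q" unfolding q_def using D b0 assms(2) by simp
  have q1: "q < 1" unfolding q_def using D b0 by (simp add: divide_less_eq)
  have hq: "q * (1 - b) = 2 * \<delta> * b * (1 - q)" unfolding q_def using D by (simp add: field_simps)
  have qq: "0 < 1 - q" using q1 by simp
  define F where "F = tulap_cdf 0 b q"
  note TP = tul_props[OF b0 q0 q1 assms(2) hq, folded F_def]
  have Feq: "F = (\<lambda>t. max 0 (min 1 ((G b t - q/2) / (1 - q))))"
    by (rule ext) (simp add: F_def tulap_eq[OF b0 q0 q1] clamp_def)
  have Fc: "isCont F t" for t
    unfolding Feq using G_cont[OF b0] q1 by (intro continuous_intros) auto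
  have psum: "(\<Sum>x\<le>n. real (n choose x) * \<theta> ^ x * (1 - \<theta>) ^ (n - x)) = 1" for \<theta> :: real
    using binomial_ring[of \<theta> "1 - \<theta>" n] by simp
  have th0: "0 \<le> \<theta>0" "\<theta>0 \<le> 1" using assms by auto
  have pnn: "0 \<le> real (n choose x) * \<theta>0 ^ x * (1 - \<theta>0) ^ (n - x)" for x using th0 by simp
  define h where "h m = binom_power n \<theta>0 (\<lambda>x. F (real x - m))" for m
  have hc: "isCont h m" for m
  proof -
    have "isCont (\<lambda>m. F (real x - m)) m" for x
      by (rule isCont_o2[OF _ Fc]) (intro continuous_intros)
    then show ?thesis unfolding h_def binom_power_def by (intro continuous_intros) auto
  qed
  have ex: "\<exists>m. h m = \<alpha>"
  proof -
    have "0 < min \<alpha> (1 - \<alpha>) * (1 - q)" using assms(3,4) qq by simp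
    then obtain j where j: "b ^ j < min \<alpha> (1 - \<alpha>) * (1 - q)" using real_arch_pow_inv b0 by blast
    have j1: "b ^ j < \<alpha> * (1 - q)" "b ^ j < (1 - \<alpha>) * (1 - q)"
    proof -
      have "min \<alpha> (1 - \<alpha>) * (1 - q) \<le> \<alpha> * (1 - q)" using qq by (intro mult_right_mono) auto
      then show "b ^ j < \<alpha> * (1 - q)" using j by linarith
      have "min \<alpha> (1 - \<alpha>) * (1 - q) \<le> (1 - \<alpha>) * (1 - q)" using qq by (intro mult_right_mono) auto
      then show "b ^ j < (1 - \<alpha>) * (1 - q)" using j by linarith
    qed
    have lo: "\<alpha> \<le> h (- (real j + 1))"
    proof -
      have Fx: "\<alpha> \<le> F (real x - (- (real j + 1)))" for x
      proof -
        define t where "t = real x - (- (real j + 1))"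
        have "1 - G b t \<le> b ^ j" using G_high[OF b0, of j t] unfolding t_def by simp
        then have "G b t > 1 - (1 - \<alpha>) * (1 - q)" using j1 by linarith
        moreover have "1 - (1 - \<alpha>) * (1 - q) = \<alpha> * (1 - q) + q" by (simp add: algebra_simps)
        ultimately have "\<alpha> * (1 - q) \<le> G b t - q/2" using q0 by linarith
        then have "\<alpha> \<le> (G b t - q/2) / (1 - q)" using qq by (simp add: le_divide_eq)
        then show ?thesis unfolding Feq t_def[symmetric] using assms(3,4) by simp
      qed
      have "\<alpha> = (\<Sum>x\<le>n. real (n choose x) * \<theta>0 ^ x * (1 - \<theta>0) ^ (n - x) * \<alpha>)"
        using psum[of \<theta>0] by (simp add: sum_distrib_right[symmetric])
      also have "\<dots> \<le> h (- (real j + 1))" unfolding h_def binom_power_def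
        using Fx pnn by (intro sum_mono mult_left_mono) auto
      finally show ?thesis .
    qed
    have hi: "h (real n + real j + 1) \<le> \<alpha>"
    proof -
      have Fx: "F (real x - (real n + real j + 1)) \<le> \<alpha>" if "x \<le> n" for x
      proof -
        define t where "t = real x - (real n + real j + 1)"
        have "t \<le> - (real j + 1)" unfolding t_def using that by simp
        then have "G b t \<le> b ^ j" using G_low[OF b0] by blast
        then have "G b t - q/2 \<le> \<alpha> * (1 - q)" using j1 q0 by linarith
        then have "(G b t - q/2) / (1 - q) \<le> \<alpha>" using qq by (simp add: divide_le_eq)
        then show ?thesis unfolding Feq t_def[symmetric] using assms(3,4) by simp
      qed
      have "h (real n + real j + 1) \<le> (\<Sum>x\<le>n. real (n choose x) * \<theta>0 ^ x * (1 - \<theta>0) ^ (n - x) * \<alpha>)"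
        unfolding h_def binom_power_def using Fx pnn by (intro sum_mono mult_left_mono) auto
      also have "\<dots> = \<alpha>"
        using psum[of \<theta>0] by (simp add: sum_distrib_right[symmetric])
      finally show ?thesis .
    qed
    have "\<exists>m. - (real j + 1) \<le> m \<and> m \<le> real n + real j + 1 \<and> h m = \<alpha>"
      using IVT2[of h "real n + real j + 1" \<alpha> "- (real j + 1)"] hi lo hc by auto
    then show ?thesis by blast
  qed
  have ump: "UMP_simple n \<theta>0 \<theta>1 \<alpha> (DP_tests n \<epsilon> \<delta>) (\<lambda>x. F (real x - m))"
    if hm: "h m = \<alpha>" for m
  proof -
    define \<phi>s where "\<phi>s x = F (real x - m)" for x
    have sh: "real (x + 1) - m = (real x - m) + 1" for x by simp
    have e1: "1 \<le> exp \<epsilon>" using assms(1) by simp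
    have "\<phi>s \<in> DP_tests n \<epsilon> \<delta>"
      unfolding DP_tests_def is_test_def
    proof (intro CollectI conjI allI impI)
      fix x assume "x \<le> n"
      show "0 \<le> \<phi>s x" "\<phi>s x \<le> 1" unfolding \<phi>s_def using TP(1,2) by auto
    next
      fix x assume "x < n"
      define t where "t = real x - m"
      have ps: "\<phi>s x = F t" "\<phi>s (x+1) = F (t+1)" unfolding \<phi>s_def t_def sh by simp_all
      have f0: "0 \<le> F t" "F t \<le> 1" "0 \<le> F (t+1)" "F (t+1) \<le> 1" using TP(1,2) by auto
      have fm: "F t \<le> F (t+1)" by (rule TP(3))
      have "F (t+1) \<le> exp \<epsilon> * F (t+1)" using e1 f0 by (simp add: mult_le_cancel_right1)
      then show "\<phi>s x \<le> exp \<epsilon> * \<phi>s (x + 1) + \<delta>" unfolding ps using fm assms(2) by linarith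
      show "\<phi>s (x + 1) \<le> exp \<epsilon> * \<phi>s x + \<delta>" unfolding ps eb using TP(4)[of t] by simp
      have "1 - F t \<le> exp \<epsilon> * (1 - F t)" using e1 f0 by (simp add: mult_le_cancel_right1)
      then show "1 - \<phi>s (x + 1) \<le> exp \<epsilon> * (1 - \<phi>s x) + \<delta>" unfolding ps using fm assms(2) by linarith
      have "b * (1 - F t) - b * \<delta> \<le> 1 - F (t+1)" using TP(5)[of t] by (simp add: algebra_simps)
      then have "(b * (1 - F t) - b * \<delta>) / b \<le> (1 - F (t+1)) / b" using b0 by (simp add: divide_right_mono)
      moreover have "(b * (1 - F t) - b * \<delta>) / b = 1 - F t - \<delta>" using b0 by (simp add: field_simps)
      ultimately show "1 - \<phi>s x \<le> exp \<epsilon> * (1 - \<phi>s (x + 1)) + \<delta>" unfolding ps eb by simp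
    qed
    moreover have "binom_power n \<theta>0 \<phi>s \<le> \<alpha>" using hm unfolding h_def \<phi>s_def by simp
    moreover have "binom_power n \<theta>1 \<phi>s \<ge> binom_power n \<theta>1 \<phi>"
      if \<phi>D: "\<phi> \<in> DP_tests n \<epsilon> \<delta>" and lv: "binom_power n \<theta>0 \<phi> \<le> \<alpha>" for \<phi>
    proof (rule np[OF assms(5,6,7)])
      have T: "is_test n \<phi>" and DP: "\<forall>x<n. \<phi> x \<le> exp \<epsilon> * \<phi> (x+1) + \<delta> \<and>
       \<phi> (x+1) \<le> exp \<epsilon> * \<phi> x + \<delta> \<and>
       1 - \<phi> x \<le> exp \<epsilon> * (1 - \<phi> (x+1)) + \<delta> \<and>
       1 - \<phi> (x+1) \<le> exp \<epsilon> * (1 - \<phi> x) + \<delta>" using \<phi>D unfolding DP_tests_def by auto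
      show "\<forall>x\<le>n. 0 \<le> \<phi> x" using T unfolding is_test_def by auto
      show "\<forall>x<n. \<phi>s x \<le> \<phi>s (Suc x)"
      proof (intro allI impI)
        fix x
        have e: "real (Suc x) - m = (real x - m) + 1" by simp
        show "\<phi>s x \<le> \<phi>s (Suc x)" unfolding \<phi>s_def e by (rule TP(3))
      qed
      show "\<forall>x<n. \<phi> x \<le> \<phi>s x \<and> 0 < \<phi>s x \<longrightarrow> \<phi> (Suc x) \<le> \<phi>s (Suc x)"
      proof (intro allI impI)
        fix x assume xn: "x < n" and c: "\<phi> x \<le> \<phi>s x \<and> 0 < \<phi>s x"
        define t where "t = real x - m"
        have e: "real (Suc x) - m = (real x - m) + 1" by simp
        have ps: "\<phi>s x = F t" "\<phi>s (Suc x) = F (t+1)" unfolding \<phi>s_def t_def e by (rule refl)+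
        have d1: "\<phi> (x+1) \<le> \<phi> x / b + \<delta>" using DP xn eb by auto
        have d2: "1 - \<phi> x \<le> (1 - \<phi> (x+1)) / b + \<delta>" using DP xn eb by auto
        then have "b * (1 - \<phi> x) \<le> b * ((1 - \<phi> (x+1)) / b + \<delta>)" using b0 by (intro mult_left_mono) auto
        also have "\<dots> = (1 - \<phi> (x+1)) + b * \<delta>" using b0 by (simp add: field_simps)
        finally have d2': "\<phi> (x+1) \<le> 1 - b + b * \<phi> x + b * \<delta>" by (simp add: algebra_simps)
        have d3: "\<phi> (x+1) \<le> 1" using T xn unfolding is_test_def by auto
        have "\<phi> (x+1) \<le> F (t+1)" using TP(6)[of "\<phi> x" t "\<phi> (x+1)"] c ps d1 d2' d3 by simp
        then show "\<phi> (Suc x) \<le> \<phi>s (Suc x)" using ps by simp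
      qed
      show "binom_power n \<theta>0 \<phi> \<le> binom_power n \<theta>0 \<phi>s" using lv hm unfolding h_def \<phi>s_def by simp
    qed
    ultimately show ?thesis unfolding UMP_simple_def \<phi>s_def by blast
  qed
  show ?thesis
  proof
    show "\<exists>m. binom_power n \<theta>0 (\<lambda>x. tulap_cdf 0 b q (real x - m)) = \<alpha>" using ex unfolding h_def F_def .
    show "\<forall>m. binom_power n \<theta>0 (\<lambda>x. tulap_cdf 0 b q (real x - m)) = \<alpha> \<longrightarrow>
             UMP_simple n \<theta>0 \<theta>1 \<alpha> (DP_tests n \<epsilon> \<delta>) (\<lambda>x. tulap_cdf 0 b q (real x - m))"
      using ump unfolding h_def F_def by blast
  qed
qed

end
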